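(* Let $A$ be a $k$-algebra. If $V$ is any irreducible $A$-module, then the underlying $A_{\mathbb{C}}$-module $V_{\mathbb{C}}$ (obtained by forgetting the action of $k$) is an irreducible $A_{\mathbb{C}}$-module.
   Context: $k=\mathcal{O}(X)$ is the coordinate algebra of a complex affine variety $X$. A $k$-algebra is a (not necessarily unital or commutative) $\mathbb{C}$-algebra $A$ which is a unital left $k$-module with $\lambda(\omega a)=\omega(\lambda a)=(\lambda\omega)a$ and $\omega(a_1a_2)=(\omega a_1)a_2=a_1(\omega a_2)$. An $A$-module is a complex vector space $V$ with algebra morphisms $A\to\mathrm{Hom}_{\mathbb{C}}(V,V)$ and a unital $k\to\mathrm{Hom}_{\mathbb{C}}(V,V)$ such that $(\omega a)v=\omega(av)=a(\omega v)$; it is irreducible if $AV\neq\{0\}$ and there is no subspace $W$ with $\{0\}\neq W\neq V$ stable under both $A$ and $k$. $A_{\mathbb{C}}$ is $A$ with the $k$-action forgotten; an $A_{\mathbb{C}}$-module $V$ is irreducible if $A_{\mathbb{C}}V\neq\{0\}$ and there is no $A_{\mathbb{C}}$-stable subspace $W$ with $\{0\}\neq W\neq V$. *)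

theory Defs
  imports Complex_Main
begin

(* The commutative ring k (type 'k) is a complex algebra via the unital ring
   homomorphism iota : C -> k; the complex scalar action on k is
   lambda . omega = iota lambda * omega. *)
definition C_algebra_structure :: "(complex \<Rightarrow> 'k::comm_ring_1) \<Rightarrow> bool" where
  "C_algebra_structure \<iota> \<longleftrightarrow>
     (\<forall>x y. \<iota> (x + y) = \<iota> x + \<iota> y) \<and>
     (\<forall>x y. \<iota> (x * y) = \<iota> x * \<iota> y) \<and>
     \<iota> 1 = 1"

inductive_set generated_subalgebra :: "(complex \<Rightarrow> 'k::comm_ring_1) \<Rightarrow> 'k set \<Rightarrow> 'k set"
  for \<iota> G where
  gen: "g \<in> G \<Longrightarrow> g \<in> generated_subalgebra \<iota> G"
| scalar: "\<iota> c \<in> generated_subalgebra \<iota> G"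
| add: "x \<in> generated_subalgebra \<iota> G \<Longrightarrow> y \<in> generated_subalgebra \<iota> G \<Longrightarrow> x + y \<in> generated_subalgebra \<iota> G"
| mult: "x \<in> generated_subalgebra \<iota> G \<Longrightarrow> y \<in> generated_subalgebra \<iota> G \<Longrightarrow> x * y \<in> generated_subalgebra \<iota> G"

(* Coordinate algebra O(X) of a complex affine variety X, i.e. (up to isomorphism)
   a finitely generated reduced commutative complex algebra. *)
definition coordinate_algebra :: "(complex \<Rightarrow> 'k::comm_ring_1) \<Rightarrow> bool" where
  "coordinate_algebra \<iota> \<longleftrightarrow>
     C_algebra_structure \<iota> \<and>
     (\<exists>G. finite G \<and> generated_subalgebra \<iota> G = UNIV) \<and>
     (\<forall>(x::'k) n. x ^ n = 0 \<longrightarrow> x = 0)"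

definition k_algebra ::
  "(complex \<Rightarrow> 'k::comm_ring_1) \<Rightarrow> (complex \<Rightarrow> 'a::ring \<Rightarrow> 'a) \<Rightarrow> ('k \<Rightarrow> 'a \<Rightarrow> 'a) \<Rightarrow> bool" where
  "k_algebra \<iota> sA act \<longleftrightarrow>
     vector_space sA \<and>
     (\<forall>c a b. sA c (a * b) = sA c a * b \<and> sA c (a * b) = a * sA c b) \<and>
     module act \<and>
     (\<forall>c \<omega> a. sA c (act \<omega> a) = act \<omega> (sA c a) \<and> act \<omega> (sA c a) = act (\<iota> c * \<omega>) a) \<and>
     (\<forall>\<omega> a b. act \<omega> (a * b) = act \<omega> a * b \<and> act \<omega> (a * b) = a * act \<omega> b)"

definition AC_module ::
  "(complex \<Rightarrow> 'a::ring \<Rightarrow> 'a) \<Rightarrow> (complex \<Rightarrow> 'v::ab_group_add \<Rightarrow> 'v) \<Rightarrow> ('a \<Rightarrow> 'v \<Rightarrow> 'v) \<Rightarrow> bool" where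
  "AC_module sA sV \<rho> \<longleftrightarrow>
     vector_space sV \<and>
     (\<forall>a. Vector_Spaces.linear sV sV (\<rho> a)) \<and>
     (\<forall>a b v. \<rho> (a + b) v = \<rho> a v + \<rho> b v) \<and>
     (\<forall>c a v. \<rho> (sA c a) v = sV c (\<rho> a v)) \<and>
     (\<forall>a b v. \<rho> (a * b) v = \<rho> a (\<rho> b v))"

definition A_module ::
  "(complex \<Rightarrow> 'k::comm_ring_1) \<Rightarrow> (complex \<Rightarrow> 'a::ring \<Rightarrow> 'a) \<Rightarrow> ('k \<Rightarrow> 'a \<Rightarrow> 'a) \<Rightarrow>
   (complex \<Rightarrow> 'v::ab_group_add \<Rightarrow> 'v) \<Rightarrow> ('a \<Rightarrow> 'v \<Rightarrow> 'v) \<Rightarrow> ('k \<Rightarrow> 'v \<Rightarrow> 'v) \<Rightarrow> bool" where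
  "A_module \<iota> sA act sV \<rho> \<kappa> \<longleftrightarrow>
     AC_module sA sV \<rho> \<and>
     (\<forall>\<omega>. Vector_Spaces.linear sV sV (\<kappa> \<omega>)) \<and>
     (\<forall>\<omega> \<omega>' v. \<kappa> (\<omega> + \<omega>') v = \<kappa> \<omega> v + \<kappa> \<omega>' v) \<and>
     (\<forall>c \<omega> v. \<kappa> (\<iota> c * \<omega>) v = sV c (\<kappa> \<omega> v)) \<and>
     (\<forall>\<omega> \<omega>' v. \<kappa> (\<omega> * \<omega>') v = \<kappa> \<omega> (\<kappa> \<omega>' v)) \<and>
     (\<forall>v. \<kappa> 1 v = v) \<and>
     (\<forall>\<omega> a v. \<rho> (act \<omega> a) v = \<kappa> \<omega> (\<rho> a v) \<and> \<kappa> \<omega> (\<rho> a v) = \<rho> a (\<kappa> \<omega> v))"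

definition irreducible_A_module ::
  "(complex \<Rightarrow> 'k::comm_ring_1) \<Rightarrow> (complex \<Rightarrow> 'a::ring \<Rightarrow> 'a) \<Rightarrow> ('k \<Rightarrow> 'a \<Rightarrow> 'a) \<Rightarrow>
   (complex \<Rightarrow> 'v::ab_group_add \<Rightarrow> 'v) \<Rightarrow> ('a \<Rightarrow> 'v \<Rightarrow> 'v) \<Rightarrow> ('k \<Rightarrow> 'v \<Rightarrow> 'v) \<Rightarrow> bool" where
  "irreducible_A_module \<iota> sA act sV \<rho> \<kappa> \<longleftrightarrow>
     A_module \<iota> sA act sV \<rho> \<kappa> \<and>
     (\<exists>a v. \<rho> a v \<noteq> 0) \<and>
     \<not> (\<exists>W. module.subspace sV W \<and> W \<noteq> {0} \<and> W \<noteq> UNIV \<and>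
            (\<forall>a w. w \<in> W \<longrightarrow> \<rho> a w \<in> W) \<and> (\<forall>\<omega> w. w \<in> W \<longrightarrow> \<kappa> \<omega> w \<in> W))"

definition irreducible_AC_module ::
  "(complex \<Rightarrow> 'a::ring \<Rightarrow> 'a) \<Rightarrow> (complex \<Rightarrow> 'v::ab_group_add \<Rightarrow> 'v) \<Rightarrow> ('a \<Rightarrow> 'v \<Rightarrow> 'v) \<Rightarrow> bool" where
  "irreducible_AC_module sA sV \<rho> \<longleftrightarrow>
     AC_module sA sV \<rho> \<and>
     (\<exists>a v. \<rho> a v \<noteq> 0) \<and>
     \<not> (\<exists>W. module.subspace sV W \<and> W \<noteq> {0} \<and> W \<noteq> UNIV \<and>
            (\<forall>a w. w \<in> W \<longrightarrow> \<rho> a w \<in> W))"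

end

theory Submission
  imports Defs
begin

theorem lemma3p3:
  fixes \<iota> :: "complex \<Rightarrow> 'k::comm_ring_1"
    and sA :: "complex \<Rightarrow> 'a::ring \<Rightarrow> 'a"
    and act :: "'k \<Rightarrow> 'a \<Rightarrow> 'a"
    and sV :: "complex \<Rightarrow> 'v::ab_group_add \<Rightarrow> 'v"
    and \<rho> :: "'a \<Rightarrow> 'v \<Rightarrow> 'v"
    and \<kappa> :: "'k \<Rightarrow> 'v \<Rightarrow> 'v"
  assumes "coordinate_algebra \<iota>"
    and "k_algebra \<iota> sA act"
    and "irreducible_A_module \<iota> sA act sV \<rho> \<kappa>"
  shows "irreducible_AC_module sA sV \<rho>"
proof -
  from assms(3) have AM: "A_module \<iota> sA act sV \<rho> \<kappa>" and nz: "\<exists>a v. \<rho> a v \<noteq> 0"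
    and irr: "\<not> (\<exists>W. module.subspace sV W \<and> W \<noteq> {0} \<and> W \<noteq> UNIV \<and>
            (\<forall>a w. w \<in> W \<longrightarrow> \<rho> a w \<in> W) \<and> (\<forall>\<omega> w. w \<in> W \<longrightarrow> \<kappa> \<omega> w \<in> W))"
    unfolding irreducible_A_module_def by blast+
  from AM have AC: "AC_module sA sV \<rho>" unfolding A_module_def by blast
  from AC have vs: "vector_space sV" and linr: "\<And>a. Vector_Spaces.linear sV sV (\<rho> a)"
    and mult: "\<And>a b v. \<rho> (a * b) v = \<rho> a (\<rho> b v)"
    unfolding AC_module_def by blast+
  from AM have link: "\<And>\<omega> a v. \<rho> (act \<omega> a) v = \<kappa> \<omega> (\<rho> a v)"
    and link2: "\<And>\<omega> a v. \<kappa> \<omega> (\<rho> a v) = \<rho> a (\<kappa> \<omega> v)"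
    and link3: "\<And>\<omega>. Vector_Spaces.linear sV sV (\<kappa> \<omega>)"
    unfolding A_module_def by blast+
  interpret V: vector_space sV by (rule vs)
  have main: False if W: "V.subspace W" "W \<noteq> {0}" "W \<noteq> UNIV" "\<forall>a w. w \<in> W \<longrightarrow> \<rho> a w \<in> W" for W
  proof (cases "\<exists>a w. w \<in> W \<and> \<rho> a w \<noteq> 0")
    case True
    then obtain a0 w0 where aw: "w0 \<in> W" "\<rho> a0 w0 \<noteq> 0" by blast
    define S where "S = {\<rho> a w | a w. w \<in> W}"
    define U where "U = V.span S"
    have SW: "S \<subseteq> W" using W(4) unfolding S_def by blast
    have UW: "U \<subseteq> W" unfolding U_def by (rule V.span_minimal[OF SW W(1)])
    have "\<rho> a0 w0 \<in> U" unfolding U_def S_def using aw by (intro V.span_base) blast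
    hence "U \<noteq> {0}" using aw by blast
    moreover have "U \<noteq> UNIV" using UW W(3) by blast
    moreover have "\<forall>a u. u \<in> U \<longrightarrow> \<rho> a u \<in> U"
    proof (intro allI impI)
      fix a u assume u: "u \<in> U"
      interpret L: Vector_Spaces.linear sV sV "\<rho> a" by (rule linr)
      have "\<rho> a ` S \<subseteq> S" unfolding S_def using mult by (auto, metis)
      hence "\<rho> a ` U \<subseteq> U" unfolding U_def using L.span_image V.span_mono by metis
      thus "\<rho> a u \<in> U" using u by blast
    qed
    moreover have "\<forall>\<omega> u. u \<in> U \<longrightarrow> \<kappa> \<omega> u \<in> U"
    proof (intro allI impI)
      fix \<omega> u assume u: "u \<in> U"
      interpret L: Vector_Spaces.linear sV sV "\<kappa> \<omega>" by (rule link3)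
      have "\<kappa> \<omega> ` S \<subseteq> S" unfolding S_def using link by (auto, metis)
      hence "\<kappa> \<omega> ` U \<subseteq> U" unfolding U_def using L.span_image V.span_mono by metis
      thus "\<kappa> \<omega> u \<in> U" using u by blast
    qed
    ultimately show False using irr V.subspace_span unfolding U_def by blast
  next
    case False
    define N where "N = {v. \<forall>a. \<rho> a v = 0}"
    have WN: "W \<subseteq> N" using False unfolding N_def by blast
    have sN: "V.subspace N" unfolding V.subspace_def N_def
    proof (intro conjI ballI CollectI allI)
      fix a show "\<rho> a 0 = 0"
      proof - interpret L: Vector_Spaces.linear sV sV "\<rho> a" by (rule linr) show ?thesis by (rule L.zero) qed
    next
      fix x y a assume x: "x \<in> {v. \<forall>a. \<rho> a v = 0}" and y: "y \<in> {v. \<forall>a. \<rho> a v = 0}"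
      interpret L: Vector_Spaces.linear sV sV "\<rho> a" by (rule linr)
      show "\<rho> a (x + y) = 0" using x y by (simp add: L.add)
    next
      fix c x a assume x: "x \<in> {v. \<forall>a. \<rho> a v = 0}"
      interpret L: Vector_Spaces.linear sV sV "\<rho> a" by (rule linr)
      show "\<rho> a (sV c x) = 0" using x by (simp add: L.scale)
    qed
    have "N \<noteq> {0}" using WN W(1,2) V.subspace_0 by blast
    moreover have "N \<noteq> UNIV" using nz unfolding N_def by blast
    moreover have "\<forall>a w. w \<in> N \<longrightarrow> \<rho> a w \<in> N"
    proof (intro allI impI)
      fix a w assume "w \<in> N"
      hence "\<rho> (b * a) w = 0" for b unfolding N_def by blast
      thus "\<rho> a w \<in> N" unfolding N_def by (simp add: mult)
    qed
    moreover have "\<forall>\<omega> w. w \<in> N \<longrightarrow> \<kappa> \<omega> w \<in> N"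
    proof (intro allI impI)
      fix \<omega> w assume w: "w \<in> N"
      interpret L: Vector_Spaces.linear sV sV "\<kappa> \<omega>" by (rule link3)
      show "\<kappa> \<omega> w \<in> N" using w unfolding N_def by (simp add: link2[symmetric] L.zero)
    qed
    ultimately show False using irr sN by blast
  qed
  show ?thesis unfolding irreducible_AC_module_def using AC nz main by blast
qed

end
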